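(* Let $A$ be a linear Nakayama algebra with simple modules $S_0,\dots,S_{n-1}$, Kupisch series $[c_0,\dots,c_{n-1}]$, and let $d_j=\dim_K D(Ae_j)$. For $0\le i\le n-1$, the indecomposable projective module $e_iA$ has injective dimension equal to one if and only if $c_i<d_{i+c_i-1}$ and $d_{i+c_i-1}-c_i=d_{i-1}$ (with the convention $d_{-1}:=0$).
   Context: $K$ is a field; a linear Nakayama algebra with $n$ simple modules is a connected algebra $A=KQ/I$ with $Q$ the quiver $0\to1\to\cdots\to n-1$ and $I$ admissible; modules are finite-dimensional right modules. $e_iA$ is uniserial with composition factors $S_i,\dots,S_{i+c_i-1}$ from top to socle, $c_i=\dim_K e_iA$. $D=\operatorname{Hom}_K(-,K)$ and $D(Ae_j)$ is the injective envelope of $S_j$. *)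

theory Defs
  imports "Jordan_Normal_Form.Matrix" "HOL-Library.Extended_Nat"
begin

text \<open>
  Finite-dimensional right modules over the linear Nakayama algebra A = KQ/I with
  Q = 0 -> 1 -> ... -> n-1 are modelled (via the standard equivalence mod A = rep(Q,I))
  as representations: a K-vector space K^(dims j) at each vertex j < n and a matrix
  maps j : K^(dims j) -> K^(dims (j+1)) for each arrow j -> j+1 (for a right module M,
  the space at j is M e_j and the arrow acts M e_j -> M e_(j+1)).
  The algebra is given by its Kupisch series c: the admissible ideal I is generated by
  the paths of length c j starting at j (whenever such a path exists).
\<close>

type_synonym 'k rep = "(nat \<Rightarrow> nat) \<times> (nat \<Rightarrow> 'k mat)"

definition dims :: "'k rep \<Rightarrow> nat \<Rightarrow> nat" where "dims X = fst X"
definition maps :: "'k rep \<Rightarrow> nat \<Rightarrow> 'k mat" where "maps X = snd X"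

text \<open>Kupisch series of a connected linear Nakayama algebra with n simples
  (admissible ideal: c i \<ge> 2 for i < n-1).\<close>
definition kupisch_series :: "nat \<Rightarrow> (nat \<Rightarrow> nat) \<Rightarrow> bool" where
  "kupisch_series n c \<longleftrightarrow> n \<ge> 1 \<and> c (n - 1) = 1 \<and>
     (\<forall>i. i + 1 < n \<longrightarrow> c i \<ge> 2 \<and> c i \<le> c (i + 1) + 1)"

fun path_map :: "'k::field rep \<Rightarrow> nat \<Rightarrow> nat \<Rightarrow> 'k mat" where
  "path_map X j 0 = 1\<^sub>m (dims X j)"
| "path_map X j (Suc l) = maps X (j + l) * path_map X j l"

definition is_rep :: "nat \<Rightarrow> (nat \<Rightarrow> nat) \<Rightarrow> 'k::field rep \<Rightarrow> bool" where
  "is_rep n c X \<longleftrightarrow>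
     (\<forall>j. j + 1 < n \<longrightarrow> maps X j \<in> carrier_mat (dims X (j + 1)) (dims X j)) \<and>
     (\<forall>j. j + c j < n \<longrightarrow> path_map X j (c j) = 0\<^sub>m (dims X (j + c j)) (dims X j))"

definition is_hom :: "nat \<Rightarrow> 'k::field rep \<Rightarrow> 'k rep \<Rightarrow> (nat \<Rightarrow> 'k mat) \<Rightarrow> bool" where
  "is_hom n X Y f \<longleftrightarrow>
     (\<forall>j<n. f j \<in> carrier_mat (dims Y j) (dims X j)) \<and>
     (\<forall>j. j + 1 < n \<longrightarrow> maps Y j * f j = f (j + 1) * maps X j)"

definition is_mono :: "nat \<Rightarrow> 'k::field rep \<Rightarrow> (nat \<Rightarrow> 'k mat) \<Rightarrow> bool" where
  "is_mono n X f \<longleftrightarrow>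
     (\<forall>j<n. \<forall>v \<in> carrier_vec (dims X j). f j *\<^sub>v v = 0\<^sub>v (dim_row (f j)) \<longrightarrow> v = 0\<^sub>v (dims X j))"

definition is_epi :: "nat \<Rightarrow> 'k::field rep \<Rightarrow> 'k rep \<Rightarrow> (nat \<Rightarrow> 'k mat) \<Rightarrow> bool" where
  "is_epi n X Y f \<longleftrightarrow>
     (\<forall>j<n. \<forall>w \<in> carrier_vec (dims Y j). \<exists>v \<in> carrier_vec (dims X j). f j *\<^sub>v v = w)"

definition exact_at :: "nat \<Rightarrow> 'k::field rep \<Rightarrow> 'k rep \<Rightarrow> 'k rep \<Rightarrow>
    (nat \<Rightarrow> 'k mat) \<Rightarrow> (nat \<Rightarrow> 'k mat) \<Rightarrow> bool" where
  "exact_at n X Y Z f g \<longleftrightarrow>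
     (\<forall>j<n. \<forall>w \<in> carrier_vec (dims Y j).
        g j *\<^sub>v w = 0\<^sub>v (dims Z j) \<longleftrightarrow> (\<exists>v \<in> carrier_vec (dims X j). f j *\<^sub>v v = w))"

definition is_injective :: "nat \<Rightarrow> (nat \<Rightarrow> nat) \<Rightarrow> 'k::field rep \<Rightarrow> bool" where
  "is_injective n c I \<longleftrightarrow> is_rep n c I \<and>
     (\<forall>X Y f g. is_rep n c X \<longrightarrow> is_rep n c Y \<longrightarrow> is_hom n X Y f \<longrightarrow> is_mono n X f \<longrightarrow>
        is_hom n X I g \<longrightarrow> (\<exists>h. is_hom n Y I h \<and> (\<forall>j<n. h j * f j = g j)))"

definition inj_coresolution :: "nat \<Rightarrow> (nat \<Rightarrow> nat) \<Rightarrow> 'k::field rep \<Rightarrow> nat \<Rightarrow>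
    (nat \<Rightarrow> 'k rep) \<Rightarrow> (nat \<Rightarrow> 'k mat) \<Rightarrow> (nat \<Rightarrow> nat \<Rightarrow> 'k mat) \<Rightarrow> bool" where
  "inj_coresolution n c M k I \<epsilon> \<delta> \<longleftrightarrow>
     (\<forall>i\<le>k. is_injective n c (I i)) \<and>
     is_hom n M (I 0) \<epsilon> \<and> is_mono n M \<epsilon> \<and>
     (\<forall>i<k. is_hom n (I i) (I (Suc i)) (\<delta> i)) \<and>
     (0 < k \<longrightarrow> exact_at n M (I 0) (I 1) \<epsilon> (\<delta> 0)) \<and>
     (\<forall>i. 0 < i \<and> i < k \<longrightarrow> exact_at n (I (i - 1)) (I i) (I (Suc i)) (\<delta> (i - 1)) (\<delta> i)) \<and>
     (if k = 0 then is_epi n M (I 0) \<epsilon> else is_epi n (I (k - 1)) (I k) (\<delta> (k - 1)))"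

definition inj_dim :: "nat \<Rightarrow> (nat \<Rightarrow> nat) \<Rightarrow> 'k::field rep \<Rightarrow> enat" where
  "inj_dim n c M = Inf (enat ` {k. \<exists>I \<epsilon> \<delta>. inj_coresolution n c M k I \<epsilon> \<delta>})"

text \<open>The indecomposable projective e_i A: (e_i A) e_j = e_i A e_j is K (the path i -> j)
  if i \<le> j < i + c i, and 0 otherwise; arrows act by identity.\<close>
definition proj_rep :: "(nat \<Rightarrow> nat) \<Rightarrow> nat \<Rightarrow> 'k::field rep" where
  "proj_rep c i =
     (let d = (\<lambda>j. if i \<le> j \<and> j < i + c i then 1 else 0)
      in (d, \<lambda>j. mat (d (j + 1)) (d j) (\<lambda>_. 1)))"

text \<open>The indecomposable injective D(A e_j): (D(A e_j)) e_i = D(e_i A e_j) is K if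
  i \<le> j < i + c i and 0 otherwise; arrows act by identity.\<close>
definition inj_rep :: "(nat \<Rightarrow> nat) \<Rightarrow> nat \<Rightarrow> 'k::field rep" where
  "inj_rep c j =
     (let d = (\<lambda>i. if i \<le> j \<and> j < i + c i then 1 else 0)
      in (d, \<lambda>i. mat (d (i + 1)) (d i) (\<lambda>_. 1)))"

definition total_dim :: "nat \<Rightarrow> 'k rep \<Rightarrow> nat" where
  "total_dim n X = (\<Sum>j<n. dims X j)"

end

theory Submission
  imports Defs
begin


lemma extend_vec_mult:
  fixes F :: "'a::field mat"
  assumes F: "F \<in> carrier_mat m (Suc p)" and x: "x \<in> carrier_vec p"
  shows "F *\<^sub>v (vec (Suc p) (\<lambda>j. if j < p then x $ j else t)) =
         mat m p (\<lambda>(i,j). F $$ (i,j)) *\<^sub>v x + t \<cdot>\<^sub>v col F p"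
proof (rule eq_vecI)
  fix i assume i: "i < dim_vec (mat m p (\<lambda>(i,j). F $$ (i,j)) *\<^sub>v x + t \<cdot>\<^sub>v col F p)"
  hence im: "i < m" using F by simp
  have "(F *\<^sub>v (vec (Suc p) (\<lambda>j. if j < p then x $ j else t))) $ i
      = (\<Sum>j<Suc p. F $$ (i,j) * (if j < p then x $ j else t))"
    using F im by (simp add: scalar_prod_def row_def lessThan_atLeast0)
  also have "\<dots> = (\<Sum>j<p. F $$ (i,j) * x $ j) + t * F $$ (i,p)"
    by (auto simp: mult.commute intro!: sum.cong)
  also have "\<dots> = (mat m p (\<lambda>(i,j). F $$ (i,j)) *\<^sub>v x + t \<cdot>\<^sub>v col F p) $ i"
    using F im x by (simp add: scalar_prod_def row_def lessThan_atLeast0 col_def)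
  finally show "(F *\<^sub>v (vec (Suc p) (\<lambda>j. if j < p then x $ j else t))) $ i =
     (mat m p (\<lambda>(i,j). F $$ (i,j)) *\<^sub>v x + t \<cdot>\<^sub>v col F p) $ i" .
qed (use F in auto)

lemma left_inverse_exists:
  fixes F :: "'a::field mat"
  assumes "F \<in> carrier_mat m p" "\<forall>v\<in>carrier_vec p. F *\<^sub>v v = 0\<^sub>v m \<longrightarrow> v = 0\<^sub>v p"
  shows "\<exists>G \<in> carrier_mat p m. G * F = 1\<^sub>m p"
  using assms
proof (induction p arbitrary: F)
  case 0
  show ?case by (rule bexI[of _ "0\<^sub>m 0 m"]) (use 0 in auto)
next
  case (Suc p)
  note F = Suc.prems(1)
  define F' where "F' = mat m p (\<lambda>(i,j). F $$ (i,j))"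
  define u where "u = col F p"
  have F': "F' \<in> carrier_mat m p" unfolding F'_def by simp
  have u: "u \<in> carrier_vec m" unfolding u_def col_def using F by auto
  have ext: "\<And>x t. x \<in> carrier_vec p \<Longrightarrow>
      F *\<^sub>v (vec (Suc p) (\<lambda>j. if j < p then x $ j else t)) = F' *\<^sub>v x + t \<cdot>\<^sub>v u"
    unfolding F'_def u_def by (rule extend_vec_mult[OF F])
  have "\<forall>v\<in>carrier_vec p. F' *\<^sub>v v = 0\<^sub>v m \<longrightarrow> v = 0\<^sub>v p"
  proof (intro ballI impI)
    fix v :: "'a vec" assume v: "v \<in> carrier_vec p" and z: "F' *\<^sub>v v = 0\<^sub>v m"
    have "F *\<^sub>v (vec (Suc p) (\<lambda>j. if j < p then v $ j else 0)) = 0\<^sub>v m"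
    proof -
      have "0 \<cdot>\<^sub>v u = 0\<^sub>v m" using u by (intro eq_vecI) auto
      thus ?thesis using ext[OF v, of 0] z u by simp
    qed
    hence V0: "vec (Suc p) (\<lambda>j. if j < p then v $ j else 0) = 0\<^sub>v (Suc p)"
      using Suc.prems(2) vec_carrier by blast
    have "v $ j = 0" if j: "j < p" for j
    proof -
      have "vec (Suc p) (\<lambda>j. if j < p then v $ j else 0) $ j = 0\<^sub>v (Suc p) $ j" using V0 by simp
      thus ?thesis using j by simp
    qed
    thus "v = 0\<^sub>v p" using v by (intro eq_vecI) auto
  qed
  from Suc.IH[OF F' this] obtain G' where G': "G' \<in> carrier_mat p m" "G' * F' = 1\<^sub>m p" by blast
  define x where "x = G' *\<^sub>v u"
  have x: "x \<in> carrier_vec p" unfolding x_def using G' u by simp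
  define Pm where "Pm = 1\<^sub>m m - F' * G'"
  have Pm: "Pm \<in> carrier_mat m m" unfolding Pm_def using F' G' by auto
  define u' where "u' = Pm *\<^sub>v u"
  have u'c: "u' \<in> carrier_vec m" unfolding u'_def using Pm u by simp
  have u'eq: "u' = u - F' *\<^sub>v x"
    unfolding u'_def Pm_def x_def using F' G' u
    by (simp add: minus_mult_distrib_mat_vec[of _ m m] assoc_mult_mat_vec[of _ m p])
  have PF: "Pm * F' = 0\<^sub>m m p"
  proof -
    have "Pm * F' = F' - F' * G' * F'" unfolding Pm_def using F' G'
      by (simp add: minus_mult_distrib_mat[of _ m m])
    also have "F' * G' * F' = F'" using F' G' by (simp add: assoc_mult_mat[of _ m p])
    finally show ?thesis using F' by simp
  qed
  have "u' \<noteq> 0\<^sub>v m"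
  proof
    assume "u' = 0\<^sub>v m"
    hence z: "u - F' *\<^sub>v x = 0\<^sub>v m" using u'eq by simp
    have "u = F' *\<^sub>v x"
    proof (rule eq_vecI)
      fix i assume "i < dim_vec (F' *\<^sub>v x)" hence i: "i < m" using F' by simp
      have "(u - F' *\<^sub>v x) $ i = 0" using z i by simp
      thus "u $ i = (F' *\<^sub>v x) $ i" using i u F' by simp
    qed (use u F' in simp)
    hence "F *\<^sub>v (vec (Suc p) (\<lambda>j. if j < p then x $ j else -1)) = 0\<^sub>v m"
    proof -
      have "u + (-1) \<cdot>\<^sub>v u = 0\<^sub>v m" using u by (intro eq_vecI) auto
      thus ?thesis using ext[OF x, of "-1"] \<open>u = F' *\<^sub>v x\<close> by simp
    qed
    hence "vec (Suc p) (\<lambda>j. if j < p then x $ j else -1) = 0\<^sub>v (Suc p)"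
      using Suc.prems(2) vec_carrier by blast
    hence "(vec (Suc p) (\<lambda>j. if j < p then x $ j else -1)) $ p = (0\<^sub>v (Suc p)) $ p" by simp
    thus False by simp
  qed
  have "\<exists>k<m. u' $ k \<noteq> 0"
  proof (rule ccontr)
    assume "\<not> (\<exists>k<m. u' $ k \<noteq> 0)"
    hence "u' = 0\<^sub>v m" using u'c by (intro eq_vecI) auto
    thus False using \<open>u' \<noteq> 0\<^sub>v m\<close> by simp
  qed
  then obtain k where k: "k < m" "u' $ k \<noteq> 0" by blast
  define \<psi> where "\<psi> = (1 / u' $ k) \<cdot>\<^sub>v row Pm k"
  have \<psi>c: "\<psi> \<in> carrier_vec m" unfolding \<psi>_def using Pm k by simp
  have \<psi>F: "\<psi> \<bullet> col F' l = 0" if l: "l < p" for l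
  proof -
    have "\<psi> \<bullet> col F' l = (1 / u' $ k) * (row Pm k \<bullet> col F' l)"
      unfolding \<psi>_def using Pm F' k l by (simp add: smult_scalar_prod_distrib[of _ m])
    also have "row Pm k \<bullet> col F' l = (Pm * F') $$ (k,l)" using Pm F' k l by simp
    finally show ?thesis using PF k l by simp
  qed
  have \<psi>u: "\<psi> \<bullet> u = 1"
  proof -
    have "\<psi> \<bullet> u = (1 / u' $ k) * (row Pm k \<bullet> u)"
      unfolding \<psi>_def using Pm u k by (simp add: smult_scalar_prod_distrib[of _ m])
    also have "row Pm k \<bullet> u = u' $ k" unfolding u'_def using Pm k by simp
    finally show ?thesis using k by simp
  qed
  define G where "G = mat (Suc p) m (\<lambda>(i,j). if i < p then G' $$ (i,j) - x $ i * \<psi> $ j else \<psi> $ j)"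
  have rowG1: "row G i = row G' i - x $ i \<cdot>\<^sub>v \<psi>" if "i < p" for i
    unfolding G_def using that G' \<psi>c by (intro eq_vecI) auto
  have rowG2: "row G p = \<psi>" unfolding G_def using \<psi>c by (intro eq_vecI) auto
  have colF1: "col F l = col F' l" if "l < p" for l
    unfolding F'_def using that F by (intro eq_vecI) auto
  show ?case
  proof (intro bexI[of _ G] eq_matI)
    show "G \<in> carrier_mat (Suc p) m" unfolding G_def by simp
    fix i l assume i: "i < dim_row (1\<^sub>m (Suc p) :: 'a mat)" and l: "l < dim_col (1\<^sub>m (Suc p) :: 'a mat)"
    hence i: "i < Suc p" and l: "l < Suc p" by auto
    have GF: "(G * F) $$ (i,l) = row G i \<bullet> col F l"
      using i l F unfolding G_def by simp
    have rG': "row G' i \<in> carrier_vec m" if "i < p" using G' that by simp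
    show "(G * F) $$ (i,l) = 1\<^sub>m (Suc p) $$ (i,l)"
    proof (cases "i < p")
      case True
      hence ri: "row G i = row G' i - x $ i \<cdot>\<^sub>v \<psi>" by (rule rowG1)
      show ?thesis
      proof (cases "l < p")
        case True
        have "(G * F) $$ (i,l) = row G' i \<bullet> col F' l - x $ i * (\<psi> \<bullet> col F' l)"
          unfolding GF ri colF1[OF True]
          using rG'[OF \<open>i<p\<close>] \<psi>c F' True
          by (simp add: minus_scalar_prod_distrib[of _ m] smult_scalar_prod_distrib[of _ m])
        also have "row G' i \<bullet> col F' l = 1\<^sub>m p $$ (i,l)"
        proof -
          have "(G' * F') $$ (i,l) = row G' i \<bullet> col F' l" using G'(1) F' \<open>i<p\<close> True by simp
          thus ?thesis by (metis G'(2))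
        qed
        finally show ?thesis using \<psi>F[OF True] \<open>i<p\<close> True by simp
      next
        case False
        hence lp: "l = p" using l by simp
        have "(G * F) $$ (i,l) = row G' i \<bullet> u - x $ i * (\<psi> \<bullet> u)"
          unfolding GF ri using lp u_def
          using rG'[OF \<open>i<p\<close>] \<psi>c u
          by (simp add: minus_scalar_prod_distrib[of _ m] smult_scalar_prod_distrib[of _ m])
        also have "row G' i \<bullet> u = x $ i" unfolding x_def using G' \<open>i<p\<close> by simp
        finally show ?thesis using \<psi>u \<open>i<p\<close> lp by simp
      qed
    next
      case False
      hence ip: "i = p" using i by simp
      show ?thesis
      proof (cases "l < p")
        case True
        have "(G * F) $$ (i,l) = \<psi> \<bullet> col F' l" using GF ip rowG2 colF1[OF True] by simp
        thus ?thesis using \<psi>F[OF True] True ip by simp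
      next
        case False
        hence lp: "l = p" using l by simp
        have "(G * F) $$ (i,l) = \<psi> \<bullet> u" using GF ip rowG2 lp u_def by simp
        thus ?thesis using \<psi>u ip lp by simp
      qed
    qed
  qed (use F in \<open>auto simp: G_def\<close>)
qed



section \<open>Kupisch combinatorics\<close>

lemma ks_pos: assumes "kupisch_series n c" "j < n" shows "1 \<le> c j"
proof (cases "j + 1 < n")
  case True thus ?thesis using assms unfolding kupisch_series_def by fastforce
next
  case False hence "j = n - 1" using assms by simp
  thus ?thesis using assms unfolding kupisch_series_def by simp
qed

lemma ks_mono: assumes ks: "kupisch_series n c" shows "a \<le> b \<Longrightarrow> b < n \<Longrightarrow> a + c a \<le> b + c b"
proof (induction b)
  case 0 thus ?case by simp
next
  case (Suc b)
  show ?case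
  proof (cases "a = Suc b")
    case True thus ?thesis by simp
  next
    case False
    hence "a \<le> b" using Suc.prems by simp
    hence "a + c a \<le> b + c b" using Suc by simp
    moreover have "c b \<le> c (b + 1) + 1" using ks Suc.prems unfolding kupisch_series_def by simp
    ultimately show ?thesis by simp
  qed
qed

lemma ks_bound: assumes ks: "kupisch_series n c" and j: "j < n" shows "j + c j \<le> n"
proof -
  have n: "n \<ge> 1" "c (n - 1) = 1" using ks unfolding kupisch_series_def by auto
  have "j + c j \<le> (n - 1) + c (n - 1)" using ks_mono[OF ks, of j "n - 1"] j by simp
  thus ?thesis using n by simp
qed

lemma dims_inj_rep: "dims (inj_rep c j :: 'k::field rep) = (\<lambda>i. if i \<le> j \<and> j < i + c i then 1 else 0)"
  unfolding inj_rep_def dims_def Let_def by simp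

lemma d_char:
  assumes ks: "kupisch_series n c" and j: "j < n"
    and d: "d j = total_dim n (inj_rep c j :: 'k::field rep)"
  shows "1 \<le> d j \<and> d j \<le> j + 1 \<and> (\<forall>a\<le>j. (j < a + c a) \<longleftrightarrow> (j + 1 - d j \<le> a))"
proof -
  define s where "s = (LEAST a. j < a + c a)"
  have cj: "j < j + c j" using ks_pos[OF ks j] by simp
  have s1: "j < s + c s" unfolding s_def by (rule LeastI[of _ j], rule cj)
  have s2: "s \<le> j" unfolding s_def by (rule Least_le, rule cj)
  have iff: "(j < a + c a) \<longleftrightarrow> s \<le> a" if a: "a \<le> j" for a
  proof
    assume "j < a + c a" thus "s \<le> a" unfolding s_def by (rule Least_le)
  next
    assume "s \<le> a"
    hence "s + c s \<le> a + c a" using ks_mono[OF ks, of s a] a j by simp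
    thus "j < a + c a" using s1 by simp
  qed
  have "total_dim n (inj_rep c j :: 'k rep) = (\<Sum>i<n. if i \<le> j \<and> j < i + c i then 1 else 0)"
    unfolding total_dim_def dims_inj_rep by simp
  also have "\<dots> = card ({..<n} \<inter> {i. i \<le> j \<and> j < i + c i})"
    by (simp add: sum.If_cases)
  also have "{..<n} \<inter> {i. i \<le> j \<and> j < i + c i} = {s..j}"
    using iff j s2 by auto
  finally have "d j = j + 1 - s" using d by simp
  thus ?thesis using iff s2 by auto
qed

section \<open>Paths in representations\<close>

lemma path_carrier:
  assumes X: "is_rep n c X" shows "l + m < n \<Longrightarrow> path_map X l m \<in> carrier_mat (dims X (l + m)) (dims X l)"
proof (induction m)
  case 0 thus ?case by simp
next
  case (Suc m)
  have "maps X (l + m) \<in> carrier_mat (dims X (l + m + 1)) (dims X (l + m))"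
    using X Suc.prems unfolding is_rep_def by simp
  thus ?case using Suc by auto
qed

lemma path_comp:
  assumes X: "is_rep n c X"
  shows "l + m1 + m2 < n \<Longrightarrow> path_map X l (m1 + m2) = path_map X (l + m1) m2 * path_map X l m1"
proof (induction m2)
  case 0
  have "path_map X l m1 \<in> carrier_mat (dims X (l + m1)) (dims X l)" using path_carrier[OF X] 0 by simp
  thus ?case by simp
next
  case (Suc m2)
  have P1: "path_map X l m1 \<in> carrier_mat (dims X (l + m1)) (dims X l)" using path_carrier[OF X] Suc.prems by simp
  have P2: "path_map X (l + m1) m2 \<in> carrier_mat (dims X (l + m1 + m2)) (dims X (l + m1))"
    using path_carrier[OF X, of "l + m1" m2] Suc.prems by simp
  have M: "maps X (l + m1 + m2) \<in> carrier_mat (dims X (l + m1 + m2 + 1)) (dims X (l + m1 + m2))"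
    using X Suc.prems unfolding is_rep_def by simp
  have "path_map X l (m1 + Suc m2) = maps X (l + (m1 + m2)) * path_map X l (m1 + m2)" by simp
  also have "\<dots> = maps X (l + m1 + m2) * (path_map X (l + m1) m2 * path_map X l m1)"
    using Suc by (simp add: add.assoc)
  also have "\<dots> = (maps X (l + m1 + m2) * path_map X (l + m1) m2) * path_map X l m1"
    using M P1 P2 by (simp add: assoc_mult_mat[OF M P2 P1])
  also have "\<dots> = path_map X (l + m1) (Suc m2) * path_map X l m1" by simp
  finally show ?case .
qed

lemma path_peel:
  assumes X: "is_rep n c X" and lm: "l + Suc m < n"
  shows "path_map X l (Suc m) = path_map X (Suc l) m * maps X l"
proof -
  have "path_map X l (1 + m) = path_map X (l + 1) m * path_map X l 1"
    using path_comp[OF X, of l 1 m] lm by simp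
  moreover have "maps X l \<in> carrier_mat (dims X (l + 1)) (dims X l)" using X lm unfolding is_rep_def by simp
  ultimately show ?thesis by simp
qed

lemma path_nat:
  assumes X: "is_rep n c X" and Y: "is_rep n c Y" and f: "is_hom n X Y f"
  shows "l + m < n \<Longrightarrow> f (l + m) * path_map X l m = path_map Y l m * f l"
proof (induction m)
  case 0
  have "f l \<in> carrier_mat (dims Y l) (dims X l)" using f 0 unfolding is_hom_def by simp
  thus ?case by simp
next
  case (Suc m)
  have fl: "f l \<in> carrier_mat (dims Y l) (dims X l)" using f Suc.prems unfolding is_hom_def by simp
  have fm: "f (l + m) \<in> carrier_mat (dims Y (l + m)) (dims X (l + m))" using f Suc.prems unfolding is_hom_def by simp
  have fm1: "f (l + m + 1) \<in> carrier_mat (dims Y (l + m + 1)) (dims X (l + m + 1))" using f Suc.prems unfolding is_hom_def by simp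
  have MX: "maps X (l + m) \<in> carrier_mat (dims X (l + m + 1)) (dims X (l + m))" using X Suc.prems unfolding is_rep_def by simp
  have MY: "maps Y (l + m) \<in> carrier_mat (dims Y (l + m + 1)) (dims Y (l + m))" using Y Suc.prems unfolding is_rep_def by simp
  have PX: "path_map X l m \<in> carrier_mat (dims X (l + m)) (dims X l)" using path_carrier[OF X] Suc.prems by simp
  have PY: "path_map Y l m \<in> carrier_mat (dims Y (l + m)) (dims Y l)" using path_carrier[OF Y] Suc.prems by simp
  have comm: "maps Y (l + m) * f (l + m) = f (l + m + 1) * maps X (l + m)"
    using f Suc.prems unfolding is_hom_def by simp
  have "f (l + Suc m) * path_map X l (Suc m) = f (l + m + 1) * (maps X (l + m) * path_map X l m)" by simp
  also have "\<dots> = (f (l + m + 1) * maps X (l + m)) * path_map X l m"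
    by (rule assoc_mult_mat[OF fm1 MX PX, symmetric])
  also have "\<dots> = (maps Y (l + m) * f (l + m)) * path_map X l m" using comm by simp
  also have "\<dots> = maps Y (l + m) * (f (l + m) * path_map X l m)"
    by (rule assoc_mult_mat[OF MY fm PX])
  also have "\<dots> = maps Y (l + m) * (path_map Y l m * f l)" using Suc by simp
  also have "\<dots> = (maps Y (l + m) * path_map Y l m) * f l"
    by (rule assoc_mult_mat[OF MY PY fl, symmetric])
  finally show ?case by simp
qed

lemma path_zero:
  assumes X: "is_rep n c X" and lq: "l + c l \<le> q" and q: "q < n"
  shows "path_map X l (q - l) = 0\<^sub>m (dims X q) (dims X l)"
proof -
  have eq: "q - l = c l + (q - l - c l)" using lq by simp
  have "path_map X l (c l + (q - l - c l)) = path_map X (l + c l) (q - l - c l) * path_map X l (c l)"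
    using path_comp[OF X, of l "c l" "q - l - c l"] lq q by simp
  also have "path_map X l (c l) = 0\<^sub>m (dims X (l + c l)) (dims X l)"
    using X lq q unfolding is_rep_def by simp
  also have "path_map X (l + c l) (q - l - c l) \<in> carrier_mat (dims X q) (dims X (l + c l))"
    using path_carrier[OF X, of "l + c l" "q - l - c l"] lq q by simp
  hence "path_map X (l + c l) (q - l - c l) * 0\<^sub>m (dims X (l + c l)) (dims X l) = 0\<^sub>m (dims X q) (dims X l)"
    by simp
  finally show ?thesis using eq by simp
qed

section \<open>Interval representations\<close>

definition ivd :: "nat \<Rightarrow> nat \<Rightarrow> nat \<Rightarrow> nat" where
  "ivd p q l = (if p \<le> l \<and> l \<le> q then 1 else 0)"

definition ivr :: "nat \<Rightarrow> nat \<Rightarrow> 'k::field rep" where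
  "ivr p q = (ivd p q, \<lambda>l. mat (ivd p q (l + 1)) (ivd p q l) (\<lambda>_. 1))"

lemma dims_ivr[simp]: "dims (ivr p q) = ivd p q" unfolding ivr_def dims_def by simp
lemma maps_ivr[simp]: "maps (ivr p q) l = mat (ivd p q (Suc l)) (ivd p q l) (\<lambda>_. 1)"
  unfolding ivr_def maps_def by simp

lemma ivd_le1: "ivd p q l \<le> 1" unfolding ivd_def by simp

lemma ones_mult: "mat a b (\<lambda>_. 1) * mat b c (\<lambda>_. 1) = (mat a c (\<lambda>_. of_nat b) :: 'k::field mat)"
  by (rule eq_matI) (auto simp: scalar_prod_def)

lemma one11: "mat 1 1 (\<lambda>_. 1) = (1\<^sub>m 1 :: 'k::field mat)"
  by (rule eq_matI) auto

lemma path_ivr: "path_map (ivr p q :: 'k::field rep) l m = mat (ivd p q (l + m)) (ivd p q l) (\<lambda>_. 1)"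
proof (induction m)
  case 0
  show ?case by (rule eq_matI) (auto simp: ivd_def split: if_splits)
next
  case (Suc m)
  show ?case
    unfolding path_map.simps Suc maps_ivr ones_mult
    by (rule eq_matI) (auto simp: ivd_def split: if_splits)
qed

lemma ivr_rep:
  assumes ks: "kupisch_series n c" and q: "q < n" and pq: "q < p + c p"
  shows "is_rep n c (ivr p q :: 'k::field rep)"
  unfolding is_rep_def
proof (intro conjI allI impI)
  fix j assume j: "j + c j < n"
  show "path_map (ivr p q :: 'k rep) j (c j) = 0\<^sub>m (dims (ivr p q :: 'k rep) (j + c j)) (dims (ivr p q :: 'k rep) j)"
  proof (rule eq_matI)
    fix a b assume a: "a < dim_row (0\<^sub>m (dims (ivr p q :: 'k rep) (j + c j)) (dims (ivr p q :: 'k rep) j) :: 'k mat)"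
      and b: "b < dim_col (0\<^sub>m (dims (ivr p q :: 'k rep) (j + c j)) (dims (ivr p q :: 'k rep) j) :: 'k mat)"
    hence "p \<le> j" "j + c j \<le> q" by (auto simp: ivd_def split: if_splits)
    moreover have "p + c p \<le> j + c j" using ks_mono[OF ks, of p j] j \<open>p \<le> j\<close> by simp
    ultimately have False using pq by simp
    thus "path_map (ivr p q :: 'k rep) j (c j) $$ (a, b) = 0\<^sub>m (dims (ivr p q :: 'k rep) (j + c j)) (dims (ivr p q :: 'k rep) j) $$ (a, b)" ..
  qed (auto simp: path_ivr)
qed auto

definition ones :: "nat \<Rightarrow> nat \<Rightarrow> nat \<Rightarrow> nat \<Rightarrow> nat \<Rightarrow> 'k::field mat" where
  "ones p q p' q' l = mat (ivd p' q' l) (ivd p q l) (\<lambda>_. 1)"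

lemma ones_hom:
  assumes "p' \<le> p" "q' \<le> q"
  shows "is_hom n (ivr p q :: 'k::field rep) (ivr p' q') (ones p q p' q')"
  unfolding is_hom_def
proof (intro conjI allI impI)
  fix j
  show "maps (ivr p' q' :: 'k rep) j * ones p q p' q' j = ones p q p' q' (j + 1) * maps (ivr p q :: 'k rep) j"
    unfolding maps_ivr ones_def ones_mult using assms
    by (intro eq_matI) (auto simp: ivd_def scalar_prod_def split: if_splits)
qed (auto simp: ones_def)

lemma ivd_cases: "ivd p q l = 0 \<or> ivd p q l = 1" unfolding ivd_def by simp

lemma ones_mono:
  assumes "p' \<le> p" "q \<le> q'"
  shows "is_mono n (ivr p q :: 'k::field rep) (ones p q p' q')"
  unfolding is_mono_def
proof (intro allI impI ballI)
  fix j and v :: "'k vec" assume j: "j < n" and v: "v \<in> carrier_vec (dims (ivr p q :: 'k rep) j)"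
    and z: "ones p q p' q' j *\<^sub>v v = 0\<^sub>v (dim_row (ones p q p' q' j :: 'k mat))"
  show "v = 0\<^sub>v (dims (ivr p q :: 'k rep) j)"
  proof (cases "ivd p q j = 0")
    case True thus ?thesis using v vec_of_dim_0 carrier_vecD by (metis dims_ivr)
  next
    case False
    hence 1: "ivd p q j = 1" "ivd p' q' j = 1" using assms ivd_cases[of p q j] by (auto simp: ivd_def split: if_splits)
    hence "ones p q p' q' j = (1\<^sub>m 1 :: 'k mat)" unfolding ones_def using one11 by simp
    thus ?thesis using z v 1 by simp
  qed
qed

lemma ones_epi:
  assumes "p \<le> p'" "q' \<le> q"
  shows "is_epi n (ivr p q :: 'k::field rep) (ivr p' q') (ones p q p' q')"
  unfolding is_epi_def
proof (intro allI impI ballI)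
  fix j and w :: "'k vec" assume j: "j < n" and w: "w \<in> carrier_vec (dims (ivr p' q' :: 'k rep) j)"
  show "\<exists>v\<in>carrier_vec (dims (ivr p q :: 'k rep) j). ones p q p' q' j *\<^sub>v v = w"
  proof (cases "ivd p' q' j = 0")
    case True
    hence "w = 0\<^sub>v 0" using w by (metis dims_ivr vec_of_dim_0 carrier_vecD)
    thus ?thesis using True by (intro bexI[of _ "0\<^sub>v (ivd p q j)"]) (auto simp: ones_def)
  next
    case False
    hence 1: "ivd p q j = 1" "ivd p' q' j = 1" using assms ivd_cases[of p' q' j] by (auto simp: ivd_def split: if_splits)
    hence "ones p q p' q' j = (1\<^sub>m 1 :: 'k mat)" unfolding ones_def using one11 by simp
    thus ?thesis using w 1 by (intro bexI[of _ w]) auto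
  qed
qed



lemma rows0: "A \<in> carrier_mat 0 k \<Longrightarrow> B \<in> carrier_mat 0 k \<Longrightarrow> A = B"
  by (rule eq_matI) auto

lemma ivr_injective:
  assumes ks: "kupisch_series n c" and aj: "a \<le> j" and jn: "j < n"
    and char: "\<forall>l\<le>j. (j < l + c l) \<longleftrightarrow> (a \<le> l)"
  shows "is_injective n c (ivr a j :: 'k::field rep)"
  unfolding is_injective_def
proof (intro conjI allI impI)
  show "is_rep n c (ivr a j :: 'k rep)" by (rule ivr_rep[OF ks jn]) (use char aj in simp)
  note Irep = this
  fix X Y :: "'k rep" and f g
  assume X: "is_rep n c X" and Y: "is_rep n c Y" and f: "is_hom n X Y f" and fm: "is_mono n X f"
    and g: "is_hom n X (ivr a j) g"
  have fc: "\<And>l. l < n \<Longrightarrow> f l \<in> carrier_mat (dims Y l) (dims X l)" using f unfolding is_hom_def by simp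
  have gc: "\<And>l. l < n \<Longrightarrow> g l \<in> carrier_mat (ivd a j l) (dims X l)" using g unfolding is_hom_def by simp
  have pYc: "\<And>l. l \<le> j \<Longrightarrow> path_map Y l (j - l) \<in> carrier_mat (dims Y j) (dims Y l)"
    using path_carrier[OF Y] jn by (metis le_add_diff_inverse)
  have pXc: "\<And>l. l \<le> j \<Longrightarrow> path_map X l (j - l) \<in> carrier_mat (dims X j) (dims X l)"
    using path_carrier[OF X] jn by (metis le_add_diff_inverse)
  define F where "F = f j"
  have Fc: "F \<in> carrier_mat (dims Y j) (dims X j)" unfolding F_def using fc jn by simp
  have "\<forall>v\<in>carrier_vec (dims X j). F *\<^sub>v v = 0\<^sub>v (dims Y j) \<longrightarrow> v = 0\<^sub>v (dims X j)"
    using fm jn Fc unfolding is_mono_def F_def by auto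
  from left_inverse_exists[OF Fc this] obtain G where
    Gc: "G \<in> carrier_mat (dims X j) (dims Y j)" and GF: "G * F = 1\<^sub>m (dims X j)" by blast
  have gj: "g j \<in> carrier_mat 1 (dims X j)" using gc[OF jn] aj by (simp add: ivd_def)
  define \<Phi> where "\<Phi> = g j * G"
  have \<Phi>c: "\<Phi> \<in> carrier_mat 1 (dims Y j)" unfolding \<Phi>_def using gj Gc by simp
  define h where "h l = (if a \<le> l \<and> l \<le> j then \<Phi> * path_map Y l (j - l) else 0\<^sub>m 0 (dims Y l))" for l
  have hc: "h l \<in> carrier_mat (ivd a j l) (dims Y l)" for l
  proof (cases "a \<le> l \<and> l \<le> j")
    case True thus ?thesis unfolding h_def using \<Phi>c pYc[of l] by (simp add: ivd_def)
  next
    case False thus ?thesis unfolding h_def by (auto simp: ivd_def)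
  qed
  show "\<exists>h. is_hom n Y (ivr a j) h \<and> (\<forall>l<n. h l * f l = g l)"
  proof (intro exI conjI allI impI)
    show "is_hom n Y (ivr a j) h"
      unfolding is_hom_def
    proof (intro conjI allI impI)
      fix l assume "l < n" thus "h l \<in> carrier_mat (dims (ivr a j :: 'k rep) l) (dims Y l)" using hc by simp
    next
      fix l assume l1: "l + 1 < n"
      have MY: "maps Y l \<in> carrier_mat (dims Y (l + 1)) (dims Y l)" using Y l1 unfolding is_rep_def by simp
      show "maps (ivr a j) l * h l = h (l + 1) * maps Y l"
      proof -
        consider (A) "a \<le> l \<and> l + 1 \<le> j" | (B) "a \<le> l \<and> l = j" | (C) "l + 1 = a \<and> l < j"
          | (D) "l + 1 < a \<or> j < l \<or> (l + 1 = a \<and> j \<le> l)" by linarith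
        thus ?thesis
        proof cases
          case A
          have I1: "maps (ivr a j :: 'k rep) l = 1\<^sub>m 1" using A one11 by (simp add: ivd_def)
          have jl: "j - l = Suc (j - Suc l)" using A by arith
          have pp: "path_map Y l (j - l) = path_map Y (Suc l) (j - Suc l) * maps Y l"
            unfolding jl by (rule path_peel[OF Y]) (use A jn in simp)
          have P2: "path_map Y (Suc l) (j - Suc l) \<in> carrier_mat (dims Y j) (dims Y (l + 1))"
            using pYc[of "Suc l"] A by simp
          have "maps (ivr a j) l * h l = h l" using I1 hc[of l] A by (simp add: ivd_def)
          also have "\<dots> = \<Phi> * (path_map Y (Suc l) (j - Suc l) * maps Y l)" using A pp by (simp add: h_def)
          also have "\<dots> = (\<Phi> * path_map Y (Suc l) (j - Suc l)) * maps Y l"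
            by (rule assoc_mult_mat[OF \<Phi>c P2 MY, symmetric])
          also have "\<dots> = h (l + 1) * maps Y l" using A by (simp add: h_def)
          finally show ?thesis .
        next
          case B
          have "maps (ivr a j) l * h l \<in> carrier_mat 0 (dims Y l)"
            using B hc[of l] by (auto simp: ivd_def)
          moreover have "h (l + 1) * maps Y l \<in> carrier_mat 0 (dims Y l)"
            using B hc[of "l+1"] MY by (auto simp: ivd_def)
          ultimately show ?thesis by (rule rows0)
        next
          case C
          have lhs: "maps (ivr a j) l * h l = 0\<^sub>m 1 (dims Y l)"
            using C by (intro eq_matI) (auto simp: ivd_def h_def scalar_prod_def)
          have jl: "j - l = Suc (j - Suc l)" using C by arith
          have pp: "path_map Y l (j - l) = path_map Y (Suc l) (j - Suc l) * maps Y l"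
            unfolding jl by (rule path_peel[OF Y]) (use C jn in arith)
          have P2: "path_map Y (Suc l) (j - Suc l) \<in> carrier_mat (dims Y j) (dims Y (l + 1))"
            using pYc[of "Suc l"] C by simp
          have z: "path_map Y l (j - l) = 0\<^sub>m (dims Y j) (dims Y l)"
          proof -
            have "\<not> (j < l + c l)" using char C by auto
            thus ?thesis using path_zero[OF Y _ jn, of l] by simp
          qed
          have "h (l + 1) * maps Y l = \<Phi> * path_map Y (Suc l) (j - Suc l) * maps Y l"
            using C by (simp add: h_def)
          also have "\<dots> = \<Phi> * path_map Y l (j - l)"
            unfolding pp by (rule assoc_mult_mat[OF \<Phi>c P2 MY])
          also have "\<dots> = 0\<^sub>m 1 (dims Y l)" unfolding z using \<Phi>c by simp
          finally show ?thesis using lhs by simp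
        next
          case D
          have "maps (ivr a j) l * h l \<in> carrier_mat 0 (dims Y l)"
            using D hc[of l] by (auto simp: ivd_def)
          moreover have "h (l + 1) * maps Y l \<in> carrier_mat 0 (dims Y l)"
            using D hc[of "l+1"] MY by (auto simp: ivd_def)
          ultimately show ?thesis by (rule rows0)
        qed
      qed
    qed
  next
    fix l assume ln: "l < n"
    show "h l * f l = g l"
    proof (cases "a \<le> l \<and> l \<le> j")
      case True
      have lj: "l + (j - l) = j" using True by simp
      have PY: "path_map Y l (j - l) \<in> carrier_mat (dims Y j) (dims Y l)" using pYc True by simp
      have PX: "path_map X l (j - l) \<in> carrier_mat (dims X j) (dims X l)" using pXc True by simp
      have natf: "f j * path_map X l (j - l) = path_map Y l (j - l) * f l"
        using path_nat[OF X Y f, of l "j - l"] lj jn by simp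
      have natg: "g j * path_map X l (j - l) = path_map (ivr a j) l (j - l) * g l"
        using path_nat[OF X Irep g, of l "j - l"] lj jn by simp
      have pI: "path_map (ivr a j :: 'k rep) l (j - l) = 1\<^sub>m 1"
        using True lj one11 by (simp add: path_ivr ivd_def)
      have gl: "g l \<in> carrier_mat 1 (dims X l)" using gc[OF ln] True by (simp add: ivd_def)
      have "h l * f l = (\<Phi> * path_map Y l (j - l)) * f l" using True by (simp add: h_def)
      also have "\<dots> = \<Phi> * (path_map Y l (j - l) * f l)" by (rule assoc_mult_mat[OF \<Phi>c PY fc[OF ln]])
      also have "\<dots> = (g j * G) * (F * path_map X l (j - l))" unfolding \<Phi>_def F_def natf ..
      also have "\<dots> = g j * (G * (F * path_map X l (j - l)))"
      proof -
        have FP: "F * path_map X l (j - l) \<in> carrier_mat (dims Y j) (dims X l)" using Fc PX by simp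
        show ?thesis by (rule assoc_mult_mat[OF gj Gc FP])
      qed
      also have "G * (F * path_map X l (j - l)) = (G * F) * path_map X l (j - l)"
        by (rule assoc_mult_mat[OF Gc Fc PX, symmetric])
      also have "\<dots> = path_map X l (j - l)" using GF PX by simp
      also have "g j * path_map X l (j - l) = g l" unfolding natg pI using gl by simp
      finally show ?thesis .
    next
      case False
      have "h l * f l \<in> carrier_mat 0 (dims X l)" using False hc[of l] fc[OF ln] by (auto simp: ivd_def)
      moreover have "g l \<in> carrier_mat 0 (dims X l)" using False gc[OF ln] by (auto simp: ivd_def)
      ultimately show ?thesis by (rule rows0)
    qed
  qed
qed



lemma cols0: "A \<in> carrier_mat r 0 \<Longrightarrow> B \<in> carrier_mat r 0 \<Longrightarrow> A = B"
  by (rule eq_matI) auto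

lemma mv0: "A \<in> carrier_mat r 0 \<Longrightarrow> u \<in> carrier_vec 0 \<Longrightarrow> A *\<^sub>v u = 0\<^sub>v r"
  by (rule eq_vecI) (auto simp: scalar_prod_def)

lemma mz: "A \<in> carrier_mat r k \<Longrightarrow> A *\<^sub>v 0\<^sub>v k = (0\<^sub>v r :: 'k::field vec)"
  by (rule eq_vecI) (auto simp: scalar_prod_def)

lemma vec0: "u \<in> carrier_vec 0 \<Longrightarrow> u = 0\<^sub>v 0"
  by (metis vec_of_dim_0 carrier_vecD)

lemma vec_eq_of_minus: "(x :: 'k::field vec) \<in> carrier_vec r \<Longrightarrow> y \<in> carrier_vec r \<Longrightarrow> x - y = 0\<^sub>v r \<Longrightarrow> x = y"
proof (rule eq_vecI)
  fix i assume x: "x \<in> carrier_vec r" and y: "y \<in> carrier_vec r" and z: "x - y = 0\<^sub>v r" and i: "i < dim_vec y"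
  have "(x - y) $ i = 0" using z i y by simp
  thus "x $ i = y $ i" using x y i by simp
qed simp

definition colm :: "'k::field vec \<Rightarrow> 'k mat" where
  "colm v = mat (dim_vec v) 1 (\<lambda>(r,_). v $ r)"

lemma colm_carrier[simp]: "v \<in> carrier_vec r \<Longrightarrow> colm v \<in> carrier_mat r 1"
  unfolding colm_def by simp

lemma colm_mult: "A \<in> carrier_mat r (dim_vec v) \<Longrightarrow> A * colm v = colm (A *\<^sub>v v)"
  unfolding colm_def by (rule eq_matI) (auto simp: scalar_prod_def col_def)

lemma colm_zero: "colm (0\<^sub>v r :: 'k::field vec) = 0\<^sub>m r 1"
  unfolding colm_def by (rule eq_matI) auto

lemma colm_e: "colm v *\<^sub>v vec 1 (\<lambda>_. 1) = (v :: 'k::field vec)"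
  unfolding colm_def by (rule eq_vecI) (auto simp: scalar_prod_def)

lemma colm_one: "colm (v :: 'k::field vec) * 1\<^sub>m 1 = colm v"
  unfolding colm_def by simp

lemma colm_one': "colm (v :: 'k::field vec) * 1\<^sub>m (Suc 0) = colm v"
  using colm_one by simp

lemma col_hom:
  assumes Z: "is_rep n c Z" and z: "z \<in> carrier_vec (dims Z p)" and pq: "p \<le> q" and qn: "q < n"
    and zc: "Suc q < n \<longrightarrow> path_map Z p (Suc q - p) *\<^sub>v z = 0\<^sub>v (dims Z (Suc q))"
  shows "is_hom n (ivr p q :: 'k::field rep) Z
           (\<lambda>l. if p \<le> l \<and> l \<le> q then colm (path_map Z p (l - p) *\<^sub>v z) else 0\<^sub>m (dims Z l) 0)"
  (is "is_hom n _ Z ?\<phi>")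
proof -
  have pc: "path_map Z p (l - p) \<in> carrier_mat (dims Z l) (dims Z p)" if "p \<le> l" "l < n" for l
    using path_carrier[OF Z, of p "l - p"] that by simp
  have \<phi>c: "?\<phi> l \<in> carrier_mat (dims Z l) (ivd p q l)" if "l < n" for l
  proof (cases "p \<le> l \<and> l \<le> q")
    case True
    hence "path_map Z p (l - p) *\<^sub>v z \<in> carrier_vec (dims Z l)" using pc[of l] that z by auto
    hence "colm (path_map Z p (l - p) *\<^sub>v z) \<in> carrier_mat (dims Z l) 1" by (rule colm_carrier)
    thus ?thesis using True by (simp add: ivd_def)
  next
    case False thus ?thesis by (auto simp: ivd_def)
  qed
  show ?thesis unfolding is_hom_def
  proof (intro conjI allI impI)
    fix l assume "l < n" thus "?\<phi> l \<in> carrier_mat (dims Z l) (dims (ivr p q :: 'k rep) l)" using \<phi>c by simp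
  next
    fix l assume l1: "l + 1 < n"
    have MZ: "maps Z l \<in> carrier_mat (dims Z (l + 1)) (dims Z l)" using Z l1 unfolding is_rep_def by simp
    show "maps Z l * ?\<phi> l = ?\<phi> (l + 1) * maps (ivr p q) l"
    proof (cases "p \<le> l \<and> l \<le> q")
      case False
      hence "ivd p q l = 0" by (auto simp: ivd_def)
      hence "maps Z l * ?\<phi> l \<in> carrier_mat (dims Z (l + 1)) 0"
        using MZ \<phi>c[of l] l1 by simp
      moreover have "?\<phi> (l + 1) * maps (ivr p q) l \<in> carrier_mat (dims Z (l + 1)) 0"
        using \<phi>c[of "l+1"] l1 \<open>ivd p q l = 0\<close> by simp
      ultimately show ?thesis by (rule cols0)
    next
      case True
      have PV: "path_map Z p (l - p) *\<^sub>v z \<in> carrier_vec (dims Z l)" using pc[of l] True l1 z by simp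
      have peel: "path_map Z p (Suc l - p) = maps Z l * path_map Z p (l - p)"
      proof -
        have "Suc l - p = Suc (l - p)" using True by (simp add: Suc_diff_le)
        thus ?thesis using True by simp
      qed
      have lhs: "maps Z l * ?\<phi> l = colm (path_map Z p (Suc l - p) *\<^sub>v z)"
        using True colm_mult[of "maps Z l" _ "path_map Z p (l - p) *\<^sub>v z"] MZ PV pc[of l] l1 z
        unfolding peel by simp
      show ?thesis
      proof (cases "l < q")
        case True2: True
        have "maps (ivr p q :: 'k rep) l = 1\<^sub>m 1" using True True2 one11 by (simp add: ivd_def)
        thus ?thesis using lhs True True2 by (simp add: colm_one colm_one')
      next
        case False
        hence lq: "l = q" using True by simp
        have "path_map Z p (Suc l - p) *\<^sub>v z = 0\<^sub>v (dims Z (Suc l))" using zc lq l1 by simp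
        hence "maps Z l * ?\<phi> l = 0\<^sub>m (dims Z (Suc l)) 1" using lhs colm_zero by simp
        moreover have "?\<phi> (l + 1) * maps (ivr p q) l = 0\<^sub>m (dims Z (Suc l)) 1"
          using lq pq by (intro eq_matI) (auto simp: ivd_def scalar_prod_def)
        ultimately show ?thesis by simp
      qed
    qed
  qed
qed

lemma e_carrier[simp]: "vec 1 (\<lambda>_. 1) \<in> carrier_vec 1" by simp

lemma e_nonzero: "vec 1 (\<lambda>_. 1 :: 'k::field) \<noteq> 0\<^sub>v 1"
proof
  assume "vec 1 (\<lambda>_. 1 :: 'k) = 0\<^sub>v 1"
  hence "vec 1 (\<lambda>_. 1 :: 'k) $ 0 = 0\<^sub>v 1 $ 0" by simp
  thus False by simp
qed

lemma no_res0:
  assumes ks: "kupisch_series n c" and ai: "a < i" and ik: "i \<le> k" and kn: "k < n"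
    and I0: "is_injective n c (I0 :: 'k::field rep)"
    and Mr: "is_rep n c (ivr i k :: 'k rep)" and Er: "is_rep n c (ivr a k :: 'k rep)"
    and \<epsilon>h: "is_hom n (ivr i k) I0 \<epsilon>" and \<epsilon>m: "is_mono n (ivr i k) \<epsilon>" and \<epsilon>e: "is_epi n (ivr i k) I0 \<epsilon>"
  shows False
proof -
  define e :: "'k vec" where "e = vec 1 (\<lambda>_. 1)"
  have ec: "e \<in> carrier_vec 1" unfolding e_def by simp
  have I0r: "is_rep n c I0" using I0 unfolding is_injective_def by simp
  have fh: "is_hom n (ivr i k :: 'k rep) (ivr a k) (ones i k a k)" by (rule ones_hom) (use ai in simp_all)
  have fm: "is_mono n (ivr i k :: 'k rep) (ones i k a k)" by (rule ones_mono) (use ai in simp_all)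
  obtain h where hh: "is_hom n (ivr a k) I0 h" and hf: "\<forall>l<n. h l * ones i k a k l = \<epsilon> l"
    using I0 Mr Er fh fm \<epsilon>h unfolding is_injective_def by blast
  have hc: "\<And>l. l < n \<Longrightarrow> h l \<in> carrier_mat (dims I0 l) (ivd a k l)" using hh unfolding is_hom_def by simp
  have \<epsilon>c: "\<And>l. l < n \<Longrightarrow> \<epsilon> l \<in> carrier_mat (dims I0 l) (ivd i k l)" using \<epsilon>h unfolding is_hom_def by simp
  define j where "j = i - 1"
  have j: "j < n" "a \<le> j" "j \<le> k" "Suc j = i" using ai ik kn unfolding j_def by auto
  have hj: "h j \<in> carrier_mat (dims I0 j) 1" using hc[of j] j by (simp add: ivd_def)
  have "\<exists>u\<in>carrier_vec (ivd i k j). \<epsilon> j *\<^sub>v u = h j *\<^sub>v e"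
    using \<epsilon>e j hj ec unfolding is_epi_def by simp
  then obtain u where u: "u \<in> carrier_vec (ivd i k j)" "\<epsilon> j *\<^sub>v u = h j *\<^sub>v e" by blast
  have ivdj: "ivd i k j = 0" using j by (simp add: ivd_def)
  have w0: "h j *\<^sub>v e = 0\<^sub>v (dims I0 j)" using u mv0[of "\<epsilon> j" "dims I0 j" u] \<epsilon>c[of j] j ivdj by simp
  have jk: "j + (k - j) = k" using j by simp
  have nat: "h k * path_map (ivr a k) j (k - j) = path_map I0 j (k - j) * h j"
    using path_nat[OF Er I0r hh, of j "k - j"] jk kn by simp
  have pE: "path_map (ivr a k :: 'k rep) j (k - j) = 1\<^sub>m 1" using j jk one11 by (simp add: path_ivr ivd_def)
  have hk: "h k \<in> carrier_mat (dims I0 k) 1" using hc[of k] j kn by (simp add: ivd_def)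
  have PI: "path_map I0 j (k - j) \<in> carrier_mat (dims I0 k) (dims I0 j)"
    using path_carrier[OF I0r, of j "k - j"] jk kn by simp
  have "h k = path_map I0 j (k - j) * h j" using nat pE hk by simp
  hence "h k *\<^sub>v e = path_map I0 j (k - j) *\<^sub>v (h j *\<^sub>v e)" using PI hj ec by simp
  hence hk0: "h k *\<^sub>v e = 0\<^sub>v (dims I0 k)" using w0 PI mz[OF PI] by simp
  have fk: "ones i k a k k = (1\<^sub>m 1 :: 'k mat)" using ik ai one11 by (simp add: ones_def ivd_def)
  have "\<epsilon> k = h k" using hf kn fk hk by (metis right_mult_one_mat hk)
  hence "\<epsilon> k *\<^sub>v e = 0\<^sub>v (dim_row (\<epsilon> k))" using hk0 hk by simp
  moreover have "e \<in> carrier_vec (dims (ivr i k :: 'k rep) k)" using ec ik by (simp add: ivd_def)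
  ultimately have "e = 0\<^sub>v (dims (ivr i k :: 'k rep) k)" using \<epsilon>m kn unfolding is_mono_def by blast
  thus False using e_nonzero[where 'k = 'k] ik unfolding e_def by (simp add: ivd_def)
qed



lemma no_res1:
  assumes ks: "kupisch_series n c" and ba: "b < a" and ai: "a < i" and ik: "i \<le> k" and kn: "k < n"
    and chark: "\<forall>l\<le>k. (k < l + c l) \<longleftrightarrow> (a \<le> l)"
    and chari: "\<forall>l\<le>i - 1. (i - 1 < l + c l) \<longleftrightarrow> (b \<le> l)"
    and I0: "is_injective n c (I0 :: 'k::field rep)" and I1: "is_injective n c (I1 :: 'k rep)"
    and \<epsilon>h: "is_hom n (ivr i k) I0 \<epsilon>" and \<epsilon>m: "is_mono n (ivr i k) \<epsilon>"
    and \<delta>h: "is_hom n I0 I1 \<delta>"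
    and ex: "exact_at n (ivr i k) I0 I1 \<epsilon> \<delta>" and \<delta>e: "is_epi n I0 I1 \<delta>"
  shows False
proof -
  define e :: "'k vec" where "e = vec 1 (\<lambda>_. 1)"
  have ec: "e \<in> carrier_vec 1" unfolding e_def by simp
  have I0r: "is_rep n c I0" using I0 unfolding is_injective_def by simp
  have I1r: "is_rep n c I1" using I1 unfolding is_injective_def by simp
  have ak: "k < a + c a" using chark ai ik by simp
  have Mr: "is_rep n c (ivr i k :: 'k rep)" by (rule ivr_rep[OF ks kn]) (use chark ai ik in simp)
  have Er: "is_rep n c (ivr a k :: 'k rep)" by (rule ivr_rep[OF ks kn]) (use ak in simp)
  have in1: "i - 1 < n" using ai ik kn by simp
  have Xr: "is_rep n c (ivr a (i - 1) :: 'k rep)" by (rule ivr_rep[OF ks in1]) (use chari ba ai in simp)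
  have Yc: "i - 1 < (a - 1) + c (a - 1)"
  proof -
    have "a - 1 \<le> i - 1" "b \<le> a - 1" using ba ai by auto
    thus ?thesis using chari by blast
  qed
  have Yr: "is_rep n c (ivr (a - 1) (i - 1) :: 'k rep)" by (rule ivr_rep[OF ks in1 Yc])
  have fh: "is_hom n (ivr i k :: 'k rep) (ivr a k) (ones i k a k)" by (rule ones_hom) (use ai in simp_all)
  have fm: "is_mono n (ivr i k :: 'k rep) (ones i k a k)" by (rule ones_mono) (use ai in simp_all)
  obtain g where gh: "is_hom n (ivr a k) I0 g" and gf: "\<forall>l<n. g l * ones i k a k l = \<epsilon> l"
    using I0 Mr Er fh fm \<epsilon>h unfolding is_injective_def by blast
  have gc: "\<And>l. l < n \<Longrightarrow> g l \<in> carrier_mat (dims I0 l) (ivd a k l)" using gh unfolding is_hom_def by simp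
  have \<epsilon>c: "\<And>l. l < n \<Longrightarrow> \<epsilon> l \<in> carrier_mat (dims I0 l) (ivd i k l)" using \<epsilon>h unfolding is_hom_def by simp
  have \<delta>c: "\<And>l. l < n \<Longrightarrow> \<delta> l \<in> carrier_mat (dims I1 l) (dims I0 l)" using \<delta>h unfolding is_hom_def by simp
  have an: "a < n" "i < n" using ai ik kn by auto
  have ga: "g a \<in> carrier_mat (dims I0 a) 1" using gc[of a] an ai ik by (simp add: ivd_def)
  have gi: "g i \<in> carrier_mat (dims I0 i) 1" using gc[of i] an ai ik by (simp add: ivd_def)
  have gk: "g k \<in> carrier_mat (dims I0 k) 1" using gc[of k] kn ai ik by (simp add: ivd_def)
  have f1: "\<And>l. i \<le> l \<Longrightarrow> l \<le> k \<Longrightarrow> ones i k a k l = (1\<^sub>m 1 :: 'k mat)"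
    using ai one11 by (simp add: ones_def ivd_def)
  have \<epsilon>g: "\<And>l. i \<le> l \<Longrightarrow> l \<le> k \<Longrightarrow> \<epsilon> l = g l"
  proof -
    fix l assume "i \<le> l" "l \<le> k"
    hence "g l \<in> carrier_mat (dims I0 l) 1" using gc[of l] kn ai by (simp add: ivd_def)
    thus "\<epsilon> l = g l" using gf f1[OF \<open>i \<le> l\<close> \<open>l \<le> k\<close>] \<open>l \<le> k\<close> kn by (metis right_mult_one_mat order.strict_trans1)
  qed
  define z where "z = \<delta> a *\<^sub>v (g a *\<^sub>v e)"
  have zc: "z \<in> carrier_vec (dims I1 a)" unfolding z_def using \<delta>c[of a] ga ec an by simp
  have pE: "\<And>l m. a \<le> l \<Longrightarrow> l + m \<le> k \<Longrightarrow> path_map (ivr a k :: 'k rep) l m = 1\<^sub>m 1"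
    using one11 by (simp add: path_ivr ivd_def)
  have natg: "\<And>l m. a \<le> l \<Longrightarrow> l + m \<le> k \<Longrightarrow> g (l + m) = path_map I0 l m * g l"
  proof -
    fix l m assume lm: "a \<le> l" "l + m \<le> k"
    have "g (l + m) * path_map (ivr a k) l m = path_map I0 l m * g l"
      using path_nat[OF Er I0r gh, of l m] lm kn by simp
    moreover have "g (l + m) \<in> carrier_mat (dims I0 (l + m)) 1" using gc[of "l + m"] lm kn by (simp add: ivd_def)
    ultimately show "g (l + m) = path_map I0 l m * g l" using pE[OF lm] by simp
  qed
  have zcond: "path_map I1 a (i - a) *\<^sub>v z = 0\<^sub>v (dims I1 i)"
  proof -
    have ai': "a + (i - a) = i" using ai by simp
    have P0: "path_map I0 a (i - a) \<in> carrier_mat (dims I0 i) (dims I0 a)"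
      using path_carrier[OF I0r, of a "i - a"] ai' an by simp
    have P1: "path_map I1 a (i - a) \<in> carrier_mat (dims I1 i) (dims I1 a)"
      using path_carrier[OF I1r, of a "i - a"] ai' an by simp
    have natd: "\<delta> i * path_map I0 a (i - a) = path_map I1 a (i - a) * \<delta> a"
      using path_nat[OF I0r I1r \<delta>h, of a "i - a"] ai' an by simp
    have "path_map I1 a (i - a) *\<^sub>v z = (path_map I1 a (i - a) * \<delta> a) *\<^sub>v (g a *\<^sub>v e)"
      unfolding z_def using P1 \<delta>c[of a] an ga ec by simp
    also have "\<dots> = (\<delta> i * path_map I0 a (i - a)) *\<^sub>v (g a *\<^sub>v e)" using natd by simp
    also have "\<dots> = \<delta> i *\<^sub>v ((path_map I0 a (i - a) * g a) *\<^sub>v e)"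
      using P0 \<delta>c[of i] an ga ec by simp
    also have "path_map I0 a (i - a) * g a = g i" using natg[of a "i - a"] ai' ik by simp
    also have "g i = \<epsilon> i" using \<epsilon>g[of i] ik by simp
    finally have eq: "path_map I1 a (i - a) *\<^sub>v z = \<delta> i *\<^sub>v (\<epsilon> i *\<^sub>v e)" .
    have "\<epsilon> i *\<^sub>v e \<in> carrier_vec (dims I0 i)" using \<epsilon>c[of i] an ec ik by (simp add: ivd_def)
    moreover have "\<exists>v\<in>carrier_vec (dims (ivr i k :: 'k rep) i). \<epsilon> i *\<^sub>v v = \<epsilon> i *\<^sub>v e"
      using ec ik by (intro bexI[of _ e]) (auto simp: ivd_def)
    ultimately have "\<delta> i *\<^sub>v (\<epsilon> i *\<^sub>v e) = 0\<^sub>v (dims I1 i)" using ex an unfolding exact_at_def by blast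
    thus ?thesis using eq by simp
  qed
  define \<phi> where "\<phi> = (\<lambda>l. if a \<le> l \<and> l \<le> i - 1 then colm (path_map I1 a (l - a) *\<^sub>v z) else 0\<^sub>m (dims I1 l) 0)"
  have \<phi>h: "is_hom n (ivr a (i - 1) :: 'k rep) I1 \<phi>"
    unfolding \<phi>_def
    by (rule col_hom[OF I1r zc]) (use ai in1 zcond in \<open>auto simp: Suc_diff_le\<close>)
  have \<iota>h: "is_hom n (ivr a (i - 1) :: 'k rep) (ivr (a - 1) (i - 1)) (ones a (i - 1) (a - 1) (i - 1))"
    by (rule ones_hom) simp_all
  have \<iota>m: "is_mono n (ivr a (i - 1) :: 'k rep) (ones a (i - 1) (a - 1) (i - 1))"
    by (rule ones_mono) simp_all
  obtain \<psi> where \<psi>h: "is_hom n (ivr (a - 1) (i - 1)) I1 \<psi>"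
    and \<psi>\<iota>: "\<forall>l<n. \<psi> l * ones a (i - 1) (a - 1) (i - 1) l = \<phi> l"
    using I1 Xr Yr \<iota>h \<iota>m \<phi>h unfolding is_injective_def by blast
  define a' where "a' = a - 1"
  have a': "Suc a' = a" "a' < n" "a' + 1 < n" using ba an unfolding a'_def by auto
  have \<psi>c: "\<And>l. l < n \<Longrightarrow> \<psi> l \<in> carrier_mat (dims I1 l) (ivd (a - 1) (i - 1) l)"
    using \<psi>h unfolding is_hom_def by simp
  have \<psi>a': "\<psi> a' \<in> carrier_mat (dims I1 a') 1"
  proof -
    have "ivd (a - 1) (i - 1) a' = 1" using ai unfolding a'_def ivd_def by auto
    thus ?thesis using \<psi>c[of a'] a' by simp
  qed
  have \<psi>a: "\<psi> a \<in> carrier_mat (dims I1 a) 1"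
  proof -
    have "ivd (a - 1) (i - 1) a = 1" using ai unfolding ivd_def by auto
    thus ?thesis using \<psi>c[of a] an by simp
  qed
  have MI1: "maps I1 a' \<in> carrier_mat (dims I1 a) (dims I1 a')" using I1r a' unfolding is_rep_def by auto
  have MI0: "maps I0 a' \<in> carrier_mat (dims I0 a) (dims I0 a')" using I0r a' unfolding is_rep_def by auto
  define s' where "s' = \<psi> a' *\<^sub>v e"
  have s'c: "s' \<in> carrier_vec (dims I1 a')" unfolding s'_def using \<psi>a' ec by simp
  have ms': "maps I1 a' *\<^sub>v s' = z"
  proof -
    have comm: "maps I1 a' * \<psi> a' = \<psi> a * maps (ivr (a - 1) (i - 1)) a'"
      using \<psi>h a' unfolding is_hom_def by auto
    have MY: "maps (ivr (a - 1) (i - 1) :: 'k rep) a' = 1\<^sub>m 1"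
    proof -
      have "a \<le> i - 1" using ai by simp
      thus ?thesis using a' one11 unfolding a'_def by (simp add: ivd_def)
    qed
    have \<iota>a: "ones a (i - 1) (a - 1) (i - 1) a = (1\<^sub>m 1 :: 'k mat)"
    proof -
      have "a \<le> i - 1" using ai by simp
      thus ?thesis using one11 by (simp add: ones_def ivd_def)
    qed
    have "maps I1 a' *\<^sub>v s' = (maps I1 a' * \<psi> a') *\<^sub>v e" unfolding s'_def using MI1 \<psi>a' ec by simp
    also have "\<dots> = \<psi> a *\<^sub>v e" using comm MY \<psi>a by simp
    also have "\<psi> a = \<phi> a" using \<psi>\<iota> \<iota>a \<psi>a an by (metis right_mult_one_mat)
    also have "\<phi> a = colm z"
    proof -
      have "a \<le> i - 1" using ai by simp
      thus ?thesis unfolding \<phi>_def using zc by simp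
    qed
    finally show ?thesis using colm_e unfolding e_def by simp
  qed
  obtain y where yc: "y \<in> carrier_vec (dims I0 a')" and dy: "\<delta> a' *\<^sub>v y = s'"
    using \<delta>e s'c a' unfolding is_epi_def by blast
  define y1 where "y1 = maps I0 a' *\<^sub>v y"
  have y1c: "y1 \<in> carrier_vec (dims I0 a)" unfolding y1_def using MI0 yc by simp
  have dy1: "\<delta> a *\<^sub>v y1 = z"
  proof -
    have comm: "maps I1 a' * \<delta> a' = \<delta> a * maps I0 a'" using \<delta>h a' unfolding is_hom_def by auto
    have "\<delta> a *\<^sub>v y1 = (\<delta> a * maps I0 a') *\<^sub>v y" unfolding y1_def using \<delta>c[of a] an MI0 yc by simp
    also have "\<dots> = (maps I1 a' * \<delta> a') *\<^sub>v y" using comm by simp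
    also have "\<dots> = maps I1 a' *\<^sub>v s'" using MI1 \<delta>c[of a'] a' yc dy by auto
    finally show ?thesis using ms' by simp
  qed
  have gae: "g a *\<^sub>v e \<in> carrier_vec (dims I0 a)" using ga ec by simp
  have "\<delta> a *\<^sub>v (y1 - g a *\<^sub>v e) = 0\<^sub>v (dims I1 a)"
    using mult_minus_distrib_mat_vec[OF \<delta>c[of a] y1c gae] an dy1 zc unfolding z_def by simp
  moreover have "y1 - g a *\<^sub>v e \<in> carrier_vec (dims I0 a)" using y1c gae by simp
  ultimately obtain v where vc: "v \<in> carrier_vec (dims (ivr i k :: 'k rep) a)" and ve: "\<epsilon> a *\<^sub>v v = y1 - g a *\<^sub>v e"
    using ex an unfolding exact_at_def by blast
  have "ivd i k a = 0" using ai by (simp add: ivd_def)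
  hence "\<epsilon> a *\<^sub>v v = 0\<^sub>v (dims I0 a)" using mv0[of "\<epsilon> a" "dims I0 a" v] \<epsilon>c[of a] an vc by simp
  hence y1eq: "y1 = g a *\<^sub>v e" using ve vec_eq_of_minus[OF y1c gae] by simp
  have ka: "k - a' = Suc (k - a)" using ai ik ba unfolding a'_def by arith
  have pz: "path_map I0 a' (k - a') = 0\<^sub>m (dims I0 k) (dims I0 a')"
  proof (rule path_zero[OF I0r _ kn])
    have "a' \<le> k" "\<not> a \<le> a'" using a' ai ik by auto
    hence "\<not> (k < a' + c a')" using chark by blast
    thus "a' + c a' \<le> k" by simp
  qed
  have pp: "path_map I0 a' (k - a') = path_map I0 a (k - a) * maps I0 a'"
    unfolding ka using path_peel[OF I0r, of a' "k - a"] a' ai ik kn by simp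
  have PA: "path_map I0 a (k - a) \<in> carrier_mat (dims I0 k) (dims I0 a)"
    using path_carrier[OF I0r, of a "k - a"] ai ik kn by simp
  have "0\<^sub>v (dims I0 k) = path_map I0 a' (k - a') *\<^sub>v y" unfolding pz using yc by (intro eq_vecI) (auto simp: scalar_prod_def)
  also have "\<dots> = path_map I0 a (k - a) *\<^sub>v y1" unfolding pp y1_def using PA MI0 yc by simp
  also have "\<dots> = (path_map I0 a (k - a) * g a) *\<^sub>v e" unfolding y1eq using PA ga ec by simp
  also have "path_map I0 a (k - a) * g a = g k" using natg[of a "k - a"] ai ik by simp
  also have "g k = \<epsilon> k" using \<epsilon>g[of k] ik by simp
  finally have "\<epsilon> k *\<^sub>v e = 0\<^sub>v (dim_row (\<epsilon> k))" using \<epsilon>c[of k] kn by simp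
  moreover have "e \<in> carrier_vec (dims (ivr i k :: 'k rep) k)" using ec ik by (simp add: ivd_def)
  ultimately have "e = 0\<^sub>v (dims (ivr i k :: 'k rep) k)" using \<epsilon>m kn unfolding is_mono_def by blast
  thus False using e_nonzero[where 'k = 'k] ik unfolding e_def by (simp add: ivd_def)
qed



lemma res1:
  assumes ks: "kupisch_series n c" and ai: "a < i" and ik: "i \<le> k" and kn: "k < n"
    and chark: "\<forall>l\<le>k. (k < l + c l) \<longleftrightarrow> (a \<le> l)"
    and chari: "\<forall>l\<le>i - 1. (i - 1 < l + c l) \<longleftrightarrow> (a \<le> l)"
  shows "inj_coresolution n c (ivr i k :: 'k::field rep) 1 (\<lambda>t. if t = 0 then ivr a k else ivr a (i - 1))
           (ones i k a k) (\<lambda>_. ones a k a (i - 1))"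
proof -
  have inj0: "is_injective n c (ivr a k :: 'k rep)"
    by (rule ivr_injective[OF ks _ kn chark]) (use ai ik in simp)
  have inj1: "is_injective n c (ivr a (i - 1) :: 'k rep)"
    by (rule ivr_injective[OF ks _ _ chari]) (use ai ik kn in simp_all)
  have exact: "exact_at n (ivr i k :: 'k rep) (ivr a k) (ivr a (i - 1)) (ones i k a k) (ones a k a (i - 1))"
    unfolding exact_at_def
  proof (intro allI impI ballI)
    fix l and w :: "'k vec" assume l: "l < n" and w: "w \<in> carrier_vec (dims (ivr a k :: 'k rep) l)"
    have c3: "ivd a k l = 0 \<or> (a \<le> l \<and> l \<le> i - 1) \<or> (i \<le> l \<and> l \<le> k)"
      using ai unfolding ivd_def by auto
    consider (O) "ivd a k l = 0" | (L) "a \<le> l \<and> l \<le> i - 1" | (H) "i \<le> l \<and> l \<le> k"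
      using c3 by (elim disjE; blast)
    thus "(ones a k a (i - 1) l *\<^sub>v w = 0\<^sub>v (dims (ivr a (i - 1) :: 'k rep) l)) =
          (\<exists>v\<in>carrier_vec (dims (ivr i k :: 'k rep) l). ones i k a k l *\<^sub>v v = w)"
    proof cases
      case O
      have d: "ivd a (i - 1) l = 0" "ivd i k l = 0" using O ai ik by (auto simp: ivd_def split: if_splits)
      have w0: "w = 0\<^sub>v 0" using w O vec0 by simp
      have "ones a k a (i - 1) l *\<^sub>v w = 0\<^sub>v 0" using d O by (intro eq_vecI) (auto simp: ones_def)
      moreover have "ones i k a k l *\<^sub>v 0\<^sub>v 0 = w" using d O w0 by (intro eq_vecI) (auto simp: ones_def)
      ultimately show ?thesis using d by auto
    next
      case L
      have d: "ivd a k l = 1" "ivd a (i - 1) l = 1" "ivd i k l = 0" using L ai ik by (auto simp: ivd_def)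
      have \<delta>1: "ones a k a (i - 1) l = (1\<^sub>m 1 :: 'k mat)" using d one11 by (simp add: ones_def)
      have \<epsilon>0: "ones i k a k l \<in> carrier_mat 1 0" using d by (simp add: ones_def)
      have "(\<exists>v\<in>carrier_vec 0. ones i k a k l *\<^sub>v v = w) \<longleftrightarrow> w = 0\<^sub>v 1"
      proof
        assume "\<exists>v\<in>carrier_vec 0. ones i k a k l *\<^sub>v v = w"
        then obtain v where "v \<in> carrier_vec 0" "ones i k a k l *\<^sub>v v = w" by blast
        thus "w = 0\<^sub>v 1" using mv0[OF \<epsilon>0] by metis
      next
        assume "w = 0\<^sub>v 1"
        thus "\<exists>v\<in>carrier_vec 0. ones i k a k l *\<^sub>v v = w" using mv0[OF \<epsilon>0, of "0\<^sub>v 0"] by auto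
      qed
      thus ?thesis using \<delta>1 d w by simp
    next
      case H
      have d: "ivd a k l = 1" "ivd a (i - 1) l = 0" "ivd i k l = 1" using H ai by (auto simp: ivd_def)
      have \<epsilon>1: "ones i k a k l = (1\<^sub>m 1 :: 'k mat)" using d one11 by (simp add: ones_def)
      have "ones a k a (i - 1) l *\<^sub>v w = 0\<^sub>v 0" using d by (intro eq_vecI) (auto simp: ones_def)
      moreover have "\<exists>v\<in>carrier_vec 1. ones i k a k l *\<^sub>v v = w" using \<epsilon>1 w d by (intro bexI[of _ w]) auto
      ultimately show ?thesis using d by simp
    qed
  qed
  show ?thesis unfolding inj_coresolution_def
  proof (intro conjI allI impI)
    fix t :: nat assume "t \<le> 1"
    thus "is_injective n c (if t = 0 then ivr a k else ivr a (i - 1) :: 'k rep)" using inj0 inj1 by auto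
  next
    show "is_hom n (ivr i k :: 'k rep) (if 0 = (0::nat) then ivr a k else ivr a (i - 1)) (ones i k a k)"
      using ones_hom[of a i k k n] ai by simp
    show "is_mono n (ivr i k :: 'k rep) (ones i k a k)" by (rule ones_mono) (use ai in simp_all)
  next
    fix t :: nat assume "t < 1"
    thus "is_hom n (if t = 0 then ivr a k else ivr a (i - 1) :: 'k rep)
            (if Suc t = 0 then ivr a k else ivr a (i - 1)) (ones a k a (i - 1))"
      using ones_hom[of a a "i - 1" k n] ai ik by force
  next
    show "exact_at n (ivr i k :: 'k rep) (if 0 = (0::nat) then ivr a k else ivr a (i - 1))
       (if 1 = (0::nat) then ivr a k else ivr a (i - 1)) (ones i k a k) (ones a k a (i - 1))"
      using exact by simp

  next
    show "if 1 = (0::nat) then is_epi n (ivr i k :: 'k rep) (if 0 = (0::nat) then ivr a k else ivr a (i - 1)) (ones i k a k)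
      else is_epi n (if 1 - 1 = (0::nat) then ivr a k else ivr a (i - 1) :: 'k rep)
        (if 1 = (0::nat) then ivr a k else ivr a (i - 1)) (ones a k a (i - 1))"
      using ones_epi[of a a "i - 1" k n] ai ik by force
  qed auto
qed

lemma inf_one: "Inf (enat ` S) = 1 \<longleftrightarrow> (1 \<in> S \<and> 0 \<notin> S)"
proof
  assume h: "Inf (enat ` S) = 1"
  have ne: "S \<noteq> {}"
  proof
    assume "S = {}" thus False using h by (simp add: top_enat_def)
  qed
  have "Inf (enat ` S) \<in> enat ` S" unfolding Inf_enat_def using ne by (auto intro: LeastI)
  hence "1 \<in> S" using h by (auto simp: one_enat_def)
  moreover have "0 \<notin> S"
  proof
    assume "0 \<in> S"
    hence "Inf (enat ` S) \<le> enat 0" by (intro Inf_lower) auto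
    thus False using h by (simp add: zero_enat_def[symmetric])
  qed
  ultimately show "1 \<in> S \<and> 0 \<notin> S" ..
next
  assume h: "1 \<in> S \<and> 0 \<notin> S"
  have "Inf (enat ` S) \<le> enat 1" using h by (intro Inf_lower) auto
  moreover have "enat 1 \<le> Inf (enat ` S)"
  proof (rule Inf_greatest)
    fix x assume "x \<in> enat ` S"
    then obtain m where "m \<in> S" "x = enat m" by auto
    thus "enat 1 \<le> x" using h by (cases m) auto
  qed
  ultimately show "Inf (enat ` S) = 1" by (simp add: one_enat_def)
qed



theorem mainTheorem6:
  fixes n :: nat and c :: "nat \<Rightarrow> nat" and i :: nat
    and d :: "nat \<Rightarrow> nat"
  assumes "kupisch_series n c"
    and "\<And>j. d j = total_dim n (inj_rep c j :: 'k::field rep)"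
    and "i < n"
  shows "inj_dim n c (proj_rep c i :: 'k rep) = 1 \<longleftrightarrow>
           (c i < d (i + c i - 1) \<and>
            d (i + c i - 1) - c i = (if i = 0 then 0 else d (i - 1)))"
proof -
  note ks = assms(1) and dd = assms(2) and iN = assms(3)
  define k where "k = i + c i - 1"
  have ci: "1 \<le> c i" using ks_pos[OF ks iN] .
  have kn: "k < n" using ks_bound[OF ks iN] ci unfolding k_def by simp
  have ik: "i \<le> k" using ci unfolding k_def by simp
  have kci: "k < i + c i" using ci unfolding k_def by simp
  from d_char[where 'k='k and d=d, OF ks kn dd[of k]]
  have dk: "1 \<le> d k" "d k \<le> k + 1" and chk: "\<forall>l\<le>k. (k < l + c l) \<longleftrightarrow> (k + 1 - d k \<le> l)" by auto
  define a where "a = k + 1 - d k"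
  have chark: "\<forall>l\<le>k. (k < l + c l) \<longleftrightarrow> (a \<le> l)" using chk unfolding a_def .
  have ai: "a \<le> i" using chark ik kci by blast
  have cik: "c i = k + 1 - i" using ci unfolding k_def by simp
  have dka: "d k = k + 1 - a" using dk unfolding a_def by simp
  have Meq: "proj_rep c i = (ivr i k :: 'k rep)"
  proof -
    have eq: "\<And>j. (if i \<le> j \<and> j < i + c i then 1 else 0) = ivd i k j"
      using ci unfolding k_def ivd_def by auto
    show ?thesis unfolding proj_rep_def ivr_def Let_def eq ..
  qed
  have Mr: "is_rep n c (ivr i k :: 'k rep)" by (rule ivr_rep[OF ks kn kci])
  have Er: "is_rep n c (ivr a k :: 'k rep)" by (rule ivr_rep[OF ks kn]) (use chark ai ik in simp)
  define S where "S = {m. \<exists>I \<epsilon> \<delta>. inj_coresolution n c (ivr i k :: 'k rep) m I \<epsilon> \<delta>}"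
  have LHS: "inj_dim n c (proj_rep c i :: 'k rep) = 1 \<longleftrightarrow> (1 \<in> S \<and> 0 \<notin> S)"
    unfolding inj_dim_def Meq S_def by (rule inf_one)
  show ?thesis
  proof (cases "a = i")
    case True
    have inj: "is_injective n c (ivr i k :: 'k rep)"
      by (rule ivr_injective[OF ks ik kn]) (use chark True in simp)
    have "inj_coresolution n c (ivr i k :: 'k rep) 0 (\<lambda>_. ivr i k) (ones i k i k) (\<lambda>_. ones i k i k)"
      unfolding inj_coresolution_def
      using inj ones_hom[of i i k k n] ones_mono[of i i k k n] ones_epi[of i i k k n] by simp
    hence "0 \<in> S" unfolding S_def by blast
    hence "inj_dim n c (proj_rep c i :: 'k rep) \<noteq> 1" using LHS by simp
    moreover have "\<not> c i < d (i + c i - 1)" using cik dka True unfolding k_def by simp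
    ultimately show ?thesis by simp
  next
    case False
    hence ai': "a < i" using ai by simp
    have i0: "i \<noteq> 0" using ai' by simp
    have i1n: "i - 1 < n" using iN by simp
    from d_char[where 'k='k and d=d, OF ks i1n dd[of "i - 1"]]
    have di: "1 \<le> d (i - 1)" "d (i - 1) \<le> i - 1 + 1"
      and chi: "\<forall>l\<le>i - 1. (i - 1 < l + c l) \<longleftrightarrow> (i - 1 + 1 - d (i - 1) \<le> l)" by auto
    define b where "b = i - 1 + 1 - d (i - 1)"
    have chari: "\<forall>l\<le>i - 1. (i - 1 < l + c l) \<longleftrightarrow> (b \<le> l)" using chi unfolding b_def .
    have ba: "b \<le> a"
    proof -
      have "k < a + c a" using chark ai ik by simp
      hence "i - 1 < a + c a" using ik by simp
      moreover have "a \<le> i - 1" using ai' by simp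
      ultimately show ?thesis using chari by blast
    qed
    have RHS: "(c i < d (i + c i - 1) \<and> d (i + c i - 1) - c i = (if i = 0 then 0 else d (i - 1)))
               \<longleftrightarrow> a = b"
    proof -
      have bb: "b = i - d (i - 1)" unfolding b_def using i0 by simp
      have di2: "d (i - 1) \<le> i" using di i0 by simp
      have "(c i < d k \<and> d k - c i = d (i - 1)) \<longleftrightarrow> a = b"
        using cik dka ai' ik di(1) di2 bb by arith
      thus ?thesis using i0 unfolding k_def by simp
    qed
    show ?thesis
    proof (cases "a = b")
      case True
      have chari': "\<forall>l\<le>i - 1. (i - 1 < l + c l) \<longleftrightarrow> (a \<le> l)" using chari True by simp
      have "1 \<in> S" unfolding S_def using res1[OF ks ai' ik kn chark chari'] by blast
      moreover have "0 \<notin> S"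
      proof
        assume "0 \<in> S"
        then obtain I \<epsilon> \<delta> where r: "inj_coresolution n c (ivr i k :: 'k rep) 0 I \<epsilon> \<delta>" unfolding S_def by blast
        hence "is_injective n c (I 0)" "is_hom n (ivr i k) (I 0) \<epsilon>" "is_mono n (ivr i k) \<epsilon>"
          "is_epi n (ivr i k) (I 0) \<epsilon>" unfolding inj_coresolution_def by auto
        thus False using no_res0[OF ks ai' ik kn _ Mr Er] by blast
      qed
      ultimately show ?thesis using LHS RHS True by simp
    next
      case False
      hence ba': "b < a" using ba by simp
      have "1 \<notin> S"
      proof
        assume "1 \<in> S"
        then obtain I \<epsilon> \<delta> where r: "inj_coresolution n c (ivr i k :: 'k rep) 1 I \<epsilon> \<delta>" unfolding S_def by blast
        hence "is_injective n c (I 0)" "is_injective n c (I 1)" "is_hom n (ivr i k) (I 0) \<epsilon>"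
          "is_mono n (ivr i k) \<epsilon>" "is_hom n (I 0) (I 1) (\<delta> 0)"
          "exact_at n (ivr i k) (I 0) (I 1) \<epsilon> (\<delta> 0)" "is_epi n (I 0) (I 1) (\<delta> 0)"
          unfolding inj_coresolution_def by auto
        thus False using no_res1[OF ks ba' ai' ik kn chark chari] by blast
      qed
      thus ?thesis using LHS RHS False by simp
    qed
  qed
qed

end
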